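(* Let $V$ be a vector space over a field $\mathbb{K}$ (of arbitrary characteristic, not necessarily finite-dimensional), let $F$ be a bilinear form on $V$, and let $f\in V^*$. For every $p\ge 0$ and every $u\in \mathcal{T}^p(V)$ we have $$ i_f\circ \Lambda_F(u)=\Lambda_F(i_f(u))+(-1)^p\,\Lambda_F(u)\circ i_f $$ as endomorphisms of $\mathcal{T}(V)$.
   Context: $\mathcal{T}(V)=\bigoplus_{p\ge0}\mathcal{T}^p(V)$ is the tensor algebra of $V$ with product $\otimes$, $\mathcal{T}^0(V)=\mathbb{K}$, $\mathcal{T}^1(V)=V$. For $x\in V$, $e_x\in\mathrm{End}(\mathcal{T}(V))$ is $e_x(u)=x\otimes u$. For $f\in V^*$, $i_f$ is the unique linear map $\mathcal{T}(V)\to\mathcal{T}(V)$ with $i_f(1)=0$ and $i_f(x\otimes u)=f(x)u-x\otimes i_f(u)$ for $x\in V$, $u\in\mathcal{T}(V)$; explicitly $i_f(x_1\otimes\cdots\otimes x_p)=\sum_{i=1}^p(-1)^{i-1}f(x_i)\,x_1\otimes\cdots\otimes\widehat{x_i}\otimes\cdots\otimes x_p$. It satisfies $i_f i_g+i_g i_f=0$ for $f,g\in V^*$. For a bilinear form $F$ and $x\in V$, $i_x^F:=i_{f_x}$ where $f_x(y)=F(x,y)$. $\Lambda_F:\mathcal{T}(V)\to\mathrm{End}(\mathcal{T}(V))$ is the unique unital algebra homomorphism with $\Lambda_F(x)=e_x+i_x^F$ for $x\in V$. *)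

theory Defs
  imports "HOL-Library.Poly_Mapping"
begin

text \<open>
  Model: a K-vector space V with basis indexed by the type 'b is the space of finitely supported
  functions 'b =>0 'k. The tensor algebra T(V) is then the free vector space on words
  over the basis, i.e. 'b list =>0 'k; the word [b1,...,bp] represents b1 \<otimes> ... \<otimes> bp,
  and T^p(V) consists of the elements supported on words of length p.
\<close>

type_synonym ('b, 'k) vec = "'b \<Rightarrow>\<^sub>0 'k"
type_synonym ('b, 'k) tens = "'b list \<Rightarrow>\<^sub>0 'k"

definition vscale :: "'k::field \<Rightarrow> ('b, 'k) vec \<Rightarrow> ('b, 'k) vec" where
  "vscale c v = Poly_Mapping.map (\<lambda>a. c * a) v"

definition tscale :: "'k::field \<Rightarrow> ('b, 'k) tens \<Rightarrow> ('b, 'k) tens" where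
  "tscale c u = Poly_Mapping.map (\<lambda>a. c * a) u"

definition lin_form :: "(('b, 'k::field) vec \<Rightarrow> 'k) \<Rightarrow> bool" where
  "lin_form f \<longleftrightarrow> (\<forall>v w. f (v + w) = f v + f w) \<and> (\<forall>c v. f (vscale c v) = c * f v)"

definition bilin_form :: "(('b, 'k::field) vec \<Rightarrow> ('b, 'k) vec \<Rightarrow> 'k) \<Rightarrow> bool" where
  "bilin_form F \<longleftrightarrow> (\<forall>x. lin_form (\<lambda>y. F x y)) \<and> (\<forall>y. lin_form (\<lambda>x. F x y))"

definition tprod :: "('b, 'k::field) tens \<Rightarrow> ('b, 'k) tens \<Rightarrow> ('b, 'k) tens" where
  "tprod u w = (\<Sum>xs\<in>Poly_Mapping.keys u. \<Sum>ys\<in>Poly_Mapping.keys w.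
       Poly_Mapping.single (xs @ ys) (Poly_Mapping.lookup u xs * Poly_Mapping.lookup w ys))"

definition incl :: "('b, 'k::field) vec \<Rightarrow> ('b, 'k) tens" where
  "incl v = (\<Sum>b\<in>Poly_Mapping.keys v. Poly_Mapping.single [b] (Poly_Mapping.lookup v b))"

definition homog :: "nat \<Rightarrow> ('b, 'k::field) tens \<Rightarrow> bool" where
  "homog p u \<longleftrightarrow> (\<forall>xs\<in>Poly_Mapping.keys u. length xs = p)"

definition bvec :: "'b \<Rightarrow> ('b, 'k::field) vec" where
  "bvec b = Poly_Mapping.single b 1"

definition emul :: "('b, 'k::field) vec \<Rightarrow> ('b, 'k) tens \<Rightarrow> ('b, 'k) tens" where
  "emul x u = tprod (incl x) u"

fun iword :: "(('b, 'k::field) vec \<Rightarrow> 'k) \<Rightarrow> 'b list \<Rightarrow> ('b, 'k) tens" where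
  "iword f [] = 0"
| "iword f (b # bs) = tscale (f (bvec b)) (Poly_Mapping.single bs 1)
                      - emul (bvec b) (iword f bs)"

definition contr :: "(('b, 'k::field) vec \<Rightarrow> 'k) \<Rightarrow> ('b, 'k) tens \<Rightarrow> ('b, 'k) tens" where
  "contr f u = (\<Sum>xs\<in>Poly_Mapping.keys u. tscale (Poly_Mapping.lookup u xs) (iword f xs))"

definition contrF :: "(('b, 'k::field) vec \<Rightarrow> ('b, 'k) vec \<Rightarrow> 'k) \<Rightarrow> ('b, 'k) vec
                      \<Rightarrow> ('b, 'k) tens \<Rightarrow> ('b, 'k) tens" where
  "contrF F x = contr (\<lambda>y. F x y)"

definition LamV :: "(('b, 'k::field) vec \<Rightarrow> ('b, 'k) vec \<Rightarrow> 'k) \<Rightarrow> ('b, 'k) vec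
                    \<Rightarrow> ('b, 'k) tens \<Rightarrow> ('b, 'k) tens" where
  "LamV F x = (\<lambda>u. emul x u + contrF F x u)"

text \<open>\<Lambda>_F: the unital algebra homomorphism T(V) \<rightarrow> End(T(V)) extending LamV:
  on a word b1...bp it is \<Lambda>_F(b1) \<circ> ... \<circ> \<Lambda>_F(bp) (identity for the empty word),
  extended linearly.\<close>
definition Lam :: "(('b, 'k::field) vec \<Rightarrow> ('b, 'k) vec \<Rightarrow> 'k) \<Rightarrow> ('b, 'k) tens
                   \<Rightarrow> ('b, 'k) tens \<Rightarrow> ('b, 'k) tens" where
  "Lam F u = (\<lambda>w. \<Sum>xs\<in>Poly_Mapping.keys u.
      tscale (Poly_Mapping.lookup u xs) (foldr (\<lambda>b g. LamV F (bvec b) \<circ> g) xs id w))"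

end

theory Submission
  imports Defs
begin

lemma lookup_tscale [simp]: "Poly_Mapping.lookup (tscale c u) x = c * Poly_Mapping.lookup u x"
  unfolding tscale_def by (simp add: Poly_Mapping.map.rep_eq when_def)

lemma tscale_add: "tscale c (u + v) = tscale c u + tscale c v"
  by (rule poly_mapping_eqI) (simp add: lookup_add algebra_simps)

lemma tscale_add_left: "tscale (a + b) u = tscale a u + tscale b u"
  by (rule poly_mapping_eqI) (simp add: lookup_add algebra_simps)

lemma tscale_mult: "tscale c (tscale d u) = tscale (c * d) u"
  by (rule poly_mapping_eqI) simp

lemma tscale_one [simp]: "tscale 1 u = u"
  by (rule poly_mapping_eqI) simp

lemma tscale_zero [simp]: "tscale 0 u = 0"
  by (rule poly_mapping_eqI) simp

lemma tscale_zero2 [simp]: "tscale c 0 = 0"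
  by (rule poly_mapping_eqI) simp

lemma tscale_neg: "tscale (- c) u = - tscale c u"
  by (rule poly_mapping_eqI) simp

lemma tscale_minus: "tscale c (u - v) = tscale c u - tscale c v"
  by (rule poly_mapping_eqI) (simp add: lookup_minus algebra_simps)

lemma tscale_uminus: "tscale c (- u) = - tscale c u"
  by (rule poly_mapping_eqI) simp

lemma tscale_sum: "tscale c (sum g A) = (\<Sum>x\<in>A. tscale c (g x))"
  by (induction A rule: infinite_finite_induct) (auto simp: tscale_add)

lemma tscale_single: "tscale c (Poly_Mapping.single xs 1) = Poly_Mapping.single xs c"
  by (rule poly_mapping_eqI) (simp add: lookup_single when_def)

definition ext :: "('a list \<Rightarrow> 'a list \<Rightarrow>\<^sub>0 'k::field) \<Rightarrow> ('a list \<Rightarrow>\<^sub>0 'k) \<Rightarrow> ('a list \<Rightarrow>\<^sub>0 'k)" where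
  "ext G u = (\<Sum>xs\<in>Poly_Mapping.keys u. tscale (Poly_Mapping.lookup u xs) (G xs))"

lemma ext_superset:
  assumes "finite S" "Poly_Mapping.keys u \<subseteq> S"
  shows "ext G u = (\<Sum>xs\<in>S. tscale (Poly_Mapping.lookup u xs) (G xs))"
  unfolding ext_def
  by (rule sum.mono_neutral_left) (use assms in \<open>auto simp: in_keys_iff\<close>)

definition lin :: "(('a list \<Rightarrow>\<^sub>0 'k::field) \<Rightarrow> ('a list \<Rightarrow>\<^sub>0 'k)) \<Rightarrow> bool" where
  "lin T \<longleftrightarrow> (\<forall>u v. T (u + v) = T u + T v) \<and> (\<forall>c u. T (tscale c u) = tscale c (T u))"

lemma lin_add: "lin T \<Longrightarrow> T (u + v) = T u + T v"
  by (simp add: lin_def)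
lemma lin_scale: "lin T \<Longrightarrow> T (tscale c u) = tscale c (T u)"
  by (simp add: lin_def)
lemma lin_zero: "lin T \<Longrightarrow> T 0 = 0"
  by (metis lin_scale tscale_zero)
lemma lin_uminus: "lin T \<Longrightarrow> T (- u) = - T u"
proof -
  assume "lin T"
  have "- u = tscale (- 1) u" by (simp add: tscale_neg)
  then have "T (- u) = tscale (- 1) (T u)" using lin_scale[OF \<open>lin T\<close>] by simp
  then show ?thesis by (simp add: tscale_neg)
qed
lemma lin_minus: "lin T \<Longrightarrow> T (u - v) = T u - T v"
  using lin_add[of T u "- v"] lin_uminus[of T v] by simp
lemma lin_sum: "lin T \<Longrightarrow> T (sum g A) = (\<Sum>x\<in>A. T (g x))"
  by (induction A rule: infinite_finite_induct) (auto simp: lin_add lin_zero)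

lemma decomp: "u = (\<Sum>xs\<in>Poly_Mapping.keys u. tscale (Poly_Mapping.lookup u xs) (Poly_Mapping.single xs 1))"
proof (rule poly_mapping_eqI)
  fix x
  show "Poly_Mapping.lookup u x = Poly_Mapping.lookup (\<Sum>xs\<in>Poly_Mapping.keys u. tscale (Poly_Mapping.lookup u xs) (Poly_Mapping.single xs 1)) x"
  proof -
    have "Poly_Mapping.lookup (\<Sum>xs\<in>Poly_Mapping.keys u. tscale (Poly_Mapping.lookup u xs) (Poly_Mapping.single xs 1)) x
      = (\<Sum>xs\<in>Poly_Mapping.keys u. if xs = x then Poly_Mapping.lookup u xs else 0)"
      by (rule trans[OF lookup_sum], rule sum.cong) (simp_all add: lookup_single when_def)
    also have "\<dots> = Poly_Mapping.lookup u x"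
      by (simp add: in_keys_iff)
    finally show ?thesis by simp
  qed
qed

lemma lin_expand: "lin T \<Longrightarrow> T u = ext (\<lambda>xs. T (Poly_Mapping.single xs 1)) u"
proof -
  assume l: "lin T"
  have "T u = T (\<Sum>xs\<in>Poly_Mapping.keys u. tscale (Poly_Mapping.lookup u xs) (Poly_Mapping.single xs 1))"
    by (rule arg_cong[of _ _ T, OF decomp])
  also have "\<dots> = ext (\<lambda>xs. T (Poly_Mapping.single xs 1)) u"
    unfolding ext_def by (simp add: lin_sum[OF l] lin_scale[OF l])
  finally show ?thesis .
qed

lemma lin_eqI:
  assumes "lin T" "lin S" "\<And>xs. T (Poly_Mapping.single xs 1) = S (Poly_Mapping.single xs 1)"
  shows "T u = S u"
proof -
  have "T u = ext (\<lambda>xs. T (Poly_Mapping.single xs 1)) u" by (rule lin_expand[OF assms(1)])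
  also have "\<dots> = ext (\<lambda>xs. S (Poly_Mapping.single xs 1)) u" using assms(3) by simp
  also have "\<dots> = S u" by (rule lin_expand[OF assms(2), symmetric])
  finally show ?thesis .
qed

lemma ext_lin:
  fixes G :: "'a list \<Rightarrow> 'a list \<Rightarrow>\<^sub>0 'k::field"
  shows "lin (ext G)"
  unfolding lin_def
proof safe
  fix u v :: "'a list \<Rightarrow>\<^sub>0 'k"
  let ?S = "Poly_Mapping.keys u \<union> Poly_Mapping.keys v"
  have "ext G (u + v) = (\<Sum>xs\<in>?S. tscale (Poly_Mapping.lookup (u+v) xs) (G xs))"
    by (rule ext_superset) (auto dest: subsetD[OF keys_add])
  also have "\<dots> = (\<Sum>xs\<in>?S. tscale (Poly_Mapping.lookup u xs) (G xs)) + (\<Sum>xs\<in>?S. tscale (Poly_Mapping.lookup v xs) (G xs))"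
    by (simp add: lookup_add tscale_add_left sum.distrib)
  also have "\<dots> = ext G u + ext G v"
    using ext_superset[of ?S u G] ext_superset[of ?S v G] by simp
  finally show "ext G (u + v) = ext G u + ext G v" .
next
  fix c and u :: "'a list \<Rightarrow>\<^sub>0 'k"
  have "ext G (tscale c u) = (\<Sum>xs\<in>Poly_Mapping.keys u. tscale (Poly_Mapping.lookup (tscale c u) xs) (G xs))"
    by (rule ext_superset) (auto simp: in_keys_iff)
  also have "\<dots> = tscale c (ext G u)"
    by (simp add: ext_def tscale_sum tscale_mult)
  finally show "ext G (tscale c u) = tscale c (ext G u)" .
qed

lemma ext_single: "ext G (Poly_Mapping.single xs 1) = G xs"
  by (simp add: ext_def)

lemma lin_comp: "lin T \<Longrightarrow> lin S \<Longrightarrow> lin (T \<circ> S)"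
  by (simp add: lin_def)
lemma lin_plus: "lin T \<Longrightarrow> lin S \<Longrightarrow> lin (\<lambda>u. T u + S u)"
  by (simp add: lin_def tscale_add)
lemma lin_diff: "lin T \<Longrightarrow> lin S \<Longrightarrow> lin (\<lambda>u. T u - S u)"
  by (simp add: lin_def tscale_minus)
lemma lin_smul: "lin (tscale c)"
  by (simp add: lin_def tscale_add tscale_mult mult.commute)
lemma lin_id: "lin id"
  by (simp add: lin_def)

lemma contr_ext: "contr f = ext (iword f)"
  by (simp add: fun_eq_iff contr_def ext_def)

lemma lin_contr: "lin (contr f)"
  by (simp add: contr_ext ext_lin)

lemma contr_single: "contr f (Poly_Mapping.single xs 1) = iword f xs"
  by (simp add: contr_ext ext_single)

lemma emul_ext: "emul (bvec b :: ('a, 'k::field) vec) = ext (\<lambda>ys. Poly_Mapping.single (b # ys) 1)"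
proof
  fix w :: "('a, 'k) tens"
  have "incl (bvec b :: ('a, 'k) vec) = Poly_Mapping.single [b] 1"
    by (simp add: incl_def bvec_def)
  then have "emul (bvec b) w = (\<Sum>ys\<in>Poly_Mapping.keys w. Poly_Mapping.single (b # ys) (Poly_Mapping.lookup w ys))"
    unfolding emul_def tprod_def by simp
  also have "\<dots> = ext (\<lambda>ys. Poly_Mapping.single (b # ys) 1) w"
    unfolding ext_def by (rule sum.cong) (simp_all add: tscale_single)
  finally show "emul (bvec b) w = ext (\<lambda>ys. Poly_Mapping.single (b # ys) 1) w" .
qed

lemma lin_emul: "lin (emul (bvec b))"
  by (simp add: emul_ext ext_lin)

lemma emul_single: "emul (bvec b) (Poly_Mapping.single ys 1) = Poly_Mapping.single (b # ys) 1"
  by (simp add: emul_ext ext_single)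

lemma lin_LamV: "lin (LamV F (bvec b))"
  unfolding LamV_def contrF_def by (intro lin_plus lin_emul lin_contr)

definition Lw where "Lw F xs = foldr (\<lambda>b g. LamV F (bvec b) \<circ> g) xs id"

lemma Lw_Nil [simp]: "Lw F [] = id" by (simp add: Lw_def)
lemma Lw_Cons: "Lw F (b # bs) = LamV F (bvec b) \<circ> Lw F bs" by (simp add: Lw_def)

lemma lin_Lw: "lin (Lw F xs)"
proof (induction xs)
  case Nil
  show ?case by (simp only: Lw_Nil lin_id)
next
  case (Cons b bs)
  show ?case unfolding Lw_Cons by (rule lin_comp[OF lin_LamV Cons.IH])
qed

lemma Lam_ext: "Lam F u w = ext (\<lambda>xs. Lw F xs w) u"
  by (simp add: Lam_def ext_def Lw_def)

lemma lin_Lam_u: "lin (\<lambda>u. Lam F u w)"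
  by (simp add: Lam_ext ext_lin)

lemma Lam_single: "Lam F (Poly_Mapping.single xs 1) w = Lw F xs w"
  by (simp add: Lam_ext ext_single)

lemma L1: "contr f (emul (bvec b) v) = tscale (f (bvec b)) v - emul (bvec b) (contr f v)"
proof -
  have l: "lin (\<lambda>v. tscale (f (bvec b)) v - emul (bvec b) (contr f v))"
    by (rule lin_diff[OF lin_smul lin_comp[OF lin_emul lin_contr, unfolded comp_def]])
  show ?thesis
    by (rule lin_eqI[OF lin_comp[OF lin_contr lin_emul, unfolded comp_def] l])
       (simp add: emul_single contr_single)
qed

lemma L2_words: "contr f (iword g xs) + contr g (iword f xs) = 0"
proof (induction xs)
  case Nil
  then show ?case by (simp add: lin_zero[OF lin_contr])
next
  case (Cons b bs)
  have "contr f (iword g (b # bs)) + contr g (iword f (b # bs))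
    = emul (bvec b) (contr f (iword g bs) + contr g (iword f bs))"
    by (simp add: lin_minus[OF lin_contr] lin_scale[OF lin_contr] contr_single L1
        lin_add[OF lin_emul] algebra_simps)
  then show ?case using Cons by (simp add: lin_zero[OF lin_emul])
qed

lemma L2: "contr f (contr g v) = - contr g (contr f v)"
proof -
  have "contr f (contr g v) + contr g (contr f v) = 0"
  proof -
    have l: "lin (\<lambda>v. contr f (contr g v) + contr g (contr f v))"
      by (intro lin_plus lin_comp[OF lin_contr lin_contr, unfolded comp_def])
    have "(\<lambda>v. contr f (contr g v) + contr g (contr f v)) v = (\<lambda>v. 0) v"
      by (rule lin_eqI[OF l]) (simp_all add: lin_def contr_single L2_words)
    then show ?thesis by simp
  qed
  then show ?thesis by (simp add: eq_neg_iff_add_eq_0)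
qed


lemma LamV_eq: "LamV F (bvec b) v = emul (bvec b) v + contr (F (bvec b)) v"
  by (simp add: LamV_def contrF_def)

lemma K: "contr f (LamV F (bvec b) v) = tscale (f (bvec b)) v - LamV F (bvec b) (contr f v)"
  unfolding LamV_eq
  by (simp add: lin_add[OF lin_contr] L1 L2[of f "F (bvec b)"] lin_add[OF lin_emul] algebra_simps)

lemma L3: "Lam F (emul (bvec b) v) w = LamV F (bvec b) (Lam F v w)"
proof -
  have l1: "lin (\<lambda>v. Lam F (emul (bvec b) v) w)"
    by (rule lin_comp[OF lin_Lam_u lin_emul, unfolded comp_def])
  have l2: "lin (\<lambda>v. LamV F (bvec b) (Lam F v w))"
    by (rule lin_comp[OF lin_LamV lin_Lam_u, unfolded comp_def])
  show ?thesis
    by (rule lin_eqI[OF l1 l2]) (simp add: emul_single Lam_single Lw_Cons)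
qed

lemma W: "contr f (Lw F xs w) = Lam F (iword f xs) w + tscale ((-1) ^ length xs) (Lw F xs (contr f w))"
proof (induction xs arbitrary: w)
  case Nil
  then show ?case by (simp add: Lam_ext ext_def)
next
  case (Cons b bs)
  let ?L = "LamV F (bvec b)"
  let ?s = "((-1) ^ length bs) :: 'b"
  have "contr f (Lw F (b # bs) w) = tscale (f (bvec b)) (Lw F bs w) - ?L (contr f (Lw F bs w))"
    by (simp add: Lw_Cons K)
  also have "\<dots> = tscale (f (bvec b)) (Lw F bs w) - ?L (Lam F (iword f bs) w) - tscale ?s (Lw F (b # bs) (contr f w))"
    by (simp add: Cons.IH lin_add[OF lin_LamV] lin_scale[OF lin_LamV] Lw_Cons)
  also have "\<dots> = Lam F (iword f (b # bs)) w + tscale ((-1) ^ length (b # bs)) (Lw F (b # bs) (contr f w))"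
    by (simp add: lin_minus[OF lin_Lam_u] lin_scale[OF lin_Lam_u] Lam_single L3 tscale_neg)
  finally show ?case .
qed

theorem mainTheorem1:
  fixes F :: "('b, 'k::field) vec \<Rightarrow> ('b, 'k) vec \<Rightarrow> 'k"
    and f :: "('b, 'k) vec \<Rightarrow> 'k"
    and p :: nat
    and u :: "('b, 'k) tens"
  assumes "bilin_form F"
    and "lin_form f"
    and "homog p u"
  shows "contr f \<circ> Lam F u
           = (\<lambda>w. Lam F (contr f u) w + tscale ((-1) ^ p) ((Lam F u \<circ> contr f) w))"
proof (rule HOL.ext)
  fix w
  let ?K = "Poly_Mapping.keys u"
  let ?c = "Poly_Mapping.lookup u"
  have "(contr f \<circ> Lam F u) w = (\<Sum>xs\<in>?K. tscale (?c xs) (contr f (Lw F xs w)))"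
    by (simp add: Lam_ext ext_def lin_sum[OF lin_contr] lin_scale[OF lin_contr])
  also have "\<dots> = (\<Sum>xs\<in>?K. tscale (?c xs) (Lam F (iword f xs) w + tscale ((-1) ^ p) (Lw F xs (contr f w))))"
    using assms(3) by (intro sum.cong) (simp_all add: W homog_def)
  also have "\<dots> = (\<Sum>xs\<in>?K. tscale (?c xs) (Lam F (iword f xs) w))
      + tscale ((-1) ^ p) (\<Sum>xs\<in>?K. tscale (?c xs) (Lw F xs (contr f w)))"
    by (simp add: tscale_add sum.distrib tscale_sum tscale_mult mult.commute)
  also have "(\<Sum>xs\<in>?K. tscale (?c xs) (Lam F (iword f xs) w)) = Lam F (contr f u) w"
    by (simp add: contr_def lin_sum[OF lin_Lam_u] lin_scale[OF lin_Lam_u])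
  also have "(\<Sum>xs\<in>?K. tscale (?c xs) (Lw F xs (contr f w))) = (Lam F u \<circ> contr f) w"
    by (simp add: Lam_ext ext_def)
  finally show "(contr f \<circ> Lam F u) w = Lam F (contr f u) w + tscale ((-1) ^ p) ((Lam F u \<circ> contr f) w)" .
qed

end
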